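(* Let $G$ be a graph with at least one vertex and $f:V(G)\to\{1,2,3,\dots\}$. Then $2\gamma_{gr}(G)=\gamma_{gr}^{\times 2}(G_f)$.
   Context: Graphs are finite, simple, undirected; $N[v]$ is the closed neighborhood. $G_f$ is the graph with vertex set $\bigcup_{v\in V(G)}\{v^1,\dots,v^{f(v)+1}\}$ in which $v^iu^j$ is an edge iff either $v=u$ and $i\neq j$, or $vu\in E(G)$ (i.e., each $v$ is replaced by $f(v)+1$ pairwise true twins). A sequence $(v_1,\dots,v_k)$ of distinct vertices is legal if $N[v_i]\setminus\bigcup_{j<i}N[v_j]\neq\emptyset$ for every $i\ge2$, and a dominating sequence if moreover its vertex set is dominating; $\gamma_{gr}(G)$ is the maximum length of a dominating sequence. A sequence $(v_1,\dots,v_k)$ of distinct vertices is a double neighborhood sequence if for each $i$ some $u\in N[v_i]$ satisfies $|\{j<i:u\in N[v_j]\}|\le1$, and a double dominating sequence if moreover every vertex $w$ has $|N[w]\cap\{v_1,\dots,v_k\}|\ge 2$; for a graph without isolated vertices $\gamma_{gr}^{\times 2}$ is the maximum length of a double dominating sequence. *)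

theory Defs
  imports Main
begin

definition simple_graph :: "'a set \<Rightarrow> ('a \<Rightarrow> 'a \<Rightarrow> bool) \<Rightarrow> bool" where
  "simple_graph V E \<longleftrightarrow> finite V \<and> (\<forall>u v. E u v \<longrightarrow> u \<in> V \<and> v \<in> V)
     \<and> (\<forall>u v. E u v \<longrightarrow> E v u) \<and> (\<forall>v. \<not> E v v)"

definition cnbh :: "'a set \<Rightarrow> ('a \<Rightarrow> 'a \<Rightarrow> bool) \<Rightarrow> 'a \<Rightarrow> 'a set" where
  "cnbh V E v = {u \<in> V. E v u} \<union> {v}"

text \<open>Sequences are lists, indexed from 0 (so the paper's i \<ge> 2 is i \<ge> 1 here).\<close>
definition legal_seq :: "'a set \<Rightarrow> ('a \<Rightarrow> 'a \<Rightarrow> bool) \<Rightarrow> 'a list \<Rightarrow> bool" where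
  "legal_seq V E s \<longleftrightarrow> distinct s \<and> set s \<subseteq> V \<and>
     (\<forall>i < length s. 1 \<le> i \<longrightarrow> cnbh V E (s ! i) - (\<Union>j<i. cnbh V E (s ! j)) \<noteq> {})"

definition dominating_seq :: "'a set \<Rightarrow> ('a \<Rightarrow> 'a \<Rightarrow> bool) \<Rightarrow> 'a list \<Rightarrow> bool" where
  "dominating_seq V E s \<longleftrightarrow> legal_seq V E s \<and> (\<forall>w \<in> V. \<exists>v \<in> set s. w \<in> cnbh V E v)"

definition gamma_gr :: "'a set \<Rightarrow> ('a \<Rightarrow> 'a \<Rightarrow> bool) \<Rightarrow> nat" where
  "gamma_gr V E = Max (length ` {s. dominating_seq V E s})"

definition double_nbh_seq :: "'a set \<Rightarrow> ('a \<Rightarrow> 'a \<Rightarrow> bool) \<Rightarrow> 'a list \<Rightarrow> bool" where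
  "double_nbh_seq V E s \<longleftrightarrow> distinct s \<and> set s \<subseteq> V \<and>
     (\<forall>i < length s. \<exists>u \<in> cnbh V E (s ! i). card {j. j < i \<and> u \<in> cnbh V E (s ! j)} \<le> 1)"

definition double_dominating_seq :: "'a set \<Rightarrow> ('a \<Rightarrow> 'a \<Rightarrow> bool) \<Rightarrow> 'a list \<Rightarrow> bool" where
  "double_dominating_seq V E s \<longleftrightarrow> double_nbh_seq V E s \<and>
     (\<forall>w \<in> V. card (cnbh V E w \<inter> set s) \<ge> 2)"

text \<open>Only meaningful for graphs without isolated vertices.\<close>
definition gamma_gr2 :: "'a set \<Rightarrow> ('a \<Rightarrow> 'a \<Rightarrow> bool) \<Rightarrow> nat" where
  "gamma_gr2 V E = Max (length ` {s. double_dominating_seq V E s})"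

text \<open>The graph G_f: vertex v replaced by true twins (v,1),...,(v,f v + 1).\<close>
definition blowup_V :: "'a set \<Rightarrow> ('a \<Rightarrow> nat) \<Rightarrow> ('a \<times> nat) set" where
  "blowup_V V f = {(v, i). v \<in> V \<and> 1 \<le> i \<and> i \<le> f v + 1}"

definition blowup_E :: "'a set \<Rightarrow> ('a \<Rightarrow> 'a \<Rightarrow> bool) \<Rightarrow> ('a \<Rightarrow> nat)
    \<Rightarrow> 'a \<times> nat \<Rightarrow> 'a \<times> nat \<Rightarrow> bool" where
  "blowup_E V E f x y \<longleftrightarrow> x \<in> blowup_V V f \<and> y \<in> blowup_V V f \<and>
     ((fst x = fst y \<and> snd x \<noteq> snd y) \<or> E (fst x) (fst y))"

end

theory Submission
  imports Defs
begin

lemma cnbh_self: "v \<in> cnbh V E v" by (simp add: cnbh_def)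

lemma cnbh_sub: "simple_graph V E \<Longrightarrow> v \<in> V \<Longrightarrow> cnbh V E v \<subseteq> V"
  by (auto simp: cnbh_def simple_graph_def)

lemma cnbh_sym: "simple_graph V E \<Longrightarrow> u \<in> V \<Longrightarrow> v \<in> V \<Longrightarrow> u \<in> cnbh V E v \<longleftrightarrow> v \<in> cnbh V E u"
  by (auto simp: cnbh_def simple_graph_def)

lemma blow_nb:
  assumes "x \<in> blowup_V V f" "y \<in> blowup_V V f"
  shows "y \<in> cnbh (blowup_V V f) (blowup_E V E f) x \<longleftrightarrow> fst y \<in> cnbh V E (fst x)"
  using assms by (cases x; cases y) (auto simp: cnbh_def blowup_E_def blowup_V_def)

lemma blow_sub: "x \<in> blowup_V V f \<Longrightarrow> cnbh (blowup_V V f) (blowup_E V E f) x \<subseteq> blowup_V V f"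
  by (auto simp: cnbh_def)

lemma card_take: "i \<le> length s \<Longrightarrow> card {j. j < i \<and> P (s!j)} = length (filter P (take i s))"
proof -
  assume "i \<le> length s"
  then have "{j. j < i \<and> P (s!j)} = {ia. ia < length (take i s) \<and> P (take i s ! ia)}"
    by auto
  then show ?thesis by (simp only: length_filter_conv_card)
qed

lemma dn_alt: "double_nbh_seq V E s \<longleftrightarrow> distinct s \<and> set s \<subseteq> V \<and>
   (\<forall>i < length s. \<exists>u \<in> cnbh V E (s ! i). length (filter (\<lambda>y. u \<in> cnbh V E y) (take i s)) \<le> 1)"
proof -
  have "\<And>i u. i < length s \<Longrightarrow> card {j. j < i \<and> u \<in> cnbh V E (s ! j)} = length (filter (\<lambda>y. u \<in> cnbh V E y) (take i s))"
    by (rule card_take) simp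
  then show ?thesis unfolding double_nbh_seq_def by auto
qed

lemma dn_snoc: "double_nbh_seq V E (xs @ [x]) \<longleftrightarrow> double_nbh_seq V E xs \<and> x \<notin> set xs \<and> x \<in> V \<and>
   (\<exists>u \<in> cnbh V E x. length (filter (\<lambda>y. u \<in> cnbh V E y) xs) \<le> 1)"
  unfolding dn_alt by (auto simp: nth_append less_Suc_eq)

lemma legal_alt: "legal_seq V E s \<longleftrightarrow> distinct s \<and> set s \<subseteq> V \<and>
   (\<forall>i < length s. 1 \<le> i \<longrightarrow> cnbh V E (s ! i) - \<Union>(cnbh V E ` set (take i s)) \<noteq> {})"
proof -
  have "\<And>i. i < length s \<Longrightarrow> (\<Union>j<i. cnbh V E (s ! j)) = \<Union>(cnbh V E ` set (take i s))"
    by (auto simp: set_conv_nth)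
  then show ?thesis unfolding legal_seq_def by auto
qed

lemma legal_snoc: "legal_seq V E (xs @ [x]) \<longleftrightarrow> legal_seq V E xs \<and> x \<notin> set xs \<and> x \<in> V \<and>
   (xs \<noteq> [] \<longrightarrow> cnbh V E x - \<Union>(cnbh V E ` set xs) \<noteq> {})"
proof -
  have a: "(\<forall>i < length (xs@[x]). 1 \<le> i \<longrightarrow> cnbh V E ((xs@[x]) ! i) - \<Union>(cnbh V E ` set (take i (xs@[x]))) \<noteq> {})
     \<longleftrightarrow> (\<forall>i < length xs. 1 \<le> i \<longrightarrow> cnbh V E (xs ! i) - \<Union>(cnbh V E ` set (take i xs)) \<noteq> {})
        \<and> (xs \<noteq> [] \<longrightarrow> cnbh V E x - \<Union>(cnbh V E ` set xs) \<noteq> {})" (is "?L \<longleftrightarrow> ?A \<and> ?B")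
  proof
    assume L: ?L
    show "?A \<and> ?B"
    proof
      show ?A
      proof (intro allI impI)
        fix i assume i: "i < length xs" "1 \<le> i"
        have "i < length (xs@[x])" using i by simp
        from L[rule_format, OF this i(2)] i show "cnbh V E (xs ! i) - \<Union>(cnbh V E ` set (take i xs)) \<noteq> {}"
          by (simp add: nth_append)
      qed
      show ?B using L[rule_format, of "length xs"] by (cases xs) auto
    qed
  next
    assume R: "?A \<and> ?B"
    show ?L
    proof (intro allI impI)
      fix i assume "i < length (xs@[x])" "1 \<le> i"
      then consider "i < length xs" | "i = length xs" by fastforce
      then show "cnbh V E ((xs@[x]) ! i) - \<Union>(cnbh V E ` set (take i (xs@[x]))) \<noteq> {}"
      proof cases
        case 1 then show ?thesis using R \<open>1 \<le> i\<close> by (auto simp: nth_append)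
      next
        case 2 then show ?thesis using R \<open>1 \<le> i\<close> by auto
      qed
    qed
  qed
  show ?thesis unfolding legal_alt a by auto
qed


definition dbl :: "'a list \<Rightarrow> ('a \<times> nat) list" where
  "dbl s = concat (map (\<lambda>v. [(v,1),(v,2)]) s)"

lemma dbl_snoc: "dbl (xs@[x]) = (dbl xs @ [(x,1)]) @ [(x,2)]"
  by (simp add: dbl_def)

lemma set_dbl: "set (dbl s) = {(v,i). v \<in> set s \<and> (i = 1 \<or> i = 2)}"
  by (induct s) (auto simp: dbl_def)

lemma len_dbl: "length (dbl s) = 2 * length s"
  by (induct s) (auto simp: dbl_def)

lemma cnt_dbl:
  assumes "u \<in> blowup_V V f" "set s \<subseteq> V" "\<forall>v\<in>V. f v \<ge> 1"
  shows "length (filter (\<lambda>y. u \<in> cnbh (blowup_V V f) (blowup_E V E f) y) (dbl s))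
       = 2 * length (filter (\<lambda>v. fst u \<in> cnbh V E v) s)"
  using assms(2)
proof (induct s)
  case Nil then show ?case by (simp add: dbl_def)
next
  case (Cons a s)
  have a: "a \<in> V" using Cons by simp
  have w: "(a,1) \<in> blowup_V V f" "(a,2) \<in> blowup_V V f" using a assms(3) by (auto simp: blowup_V_def)
  have "u \<in> cnbh (blowup_V V f) (blowup_E V E f) (a,1) \<longleftrightarrow> fst u \<in> cnbh V E a"
       "u \<in> cnbh (blowup_V V f) (blowup_E V E f) (a,2) \<longleftrightarrow> fst u \<in> cnbh V E a"
    using blow_nb[OF w(1) assms(1)] blow_nb[OF w(2) assms(1)] by auto
  then show ?case using Cons by (auto simp: dbl_def)
qed

lemma dir1:
  assumes G: "simple_graph V E" and f: "\<forall>v\<in>V. f v \<ge> 1" and L: "legal_seq V E s"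
  shows "double_nbh_seq (blowup_V V f) (blowup_E V E f) (dbl s)"
  using L
proof (induct s rule: rev_induct)
  case Nil then show ?case by (simp add: dbl_def double_nbh_seq_def)
next
  case (snoc x xs)
  let ?W = "blowup_V V f" and ?F = "blowup_E V E f"
  from snoc.prems have lx: "legal_seq V E xs" "x \<notin> set xs" "x \<in> V"
    and nw: "xs \<noteq> [] \<longrightarrow> cnbh V E x - \<Union>(cnbh V E ` set xs) \<noteq> {}"
    by (auto simp: legal_snoc)
  have sx: "set xs \<subseteq> V" using lx(1) by (simp add: legal_seq_def)
  obtain w where w: "w \<in> cnbh V E x" "\<forall>v\<in>set xs. w \<notin> cnbh V E v"
  proof (cases "xs = []")
    case True then show ?thesis using that[of x] cnbh_self[of x V E] by simp
  next
    case False then show ?thesis using nw that by blast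
  qed
  have wV: "w \<in> V" using cnbh_sub[OF G lx(3)] w(1) by blast
  have x12: "(x,1) \<in> ?W" "(x,2) \<in> ?W" using lx(3) f by (auto simp: blowup_V_def)
  have w1: "(w,1) \<in> ?W" using wV by (auto simp: blowup_V_def)
  have c0: "length (filter (\<lambda>y. (w,1) \<in> cnbh ?W ?F y) (dbl xs)) = 0"
    using cnt_dbl[OF w1 sx f, of E] w(2) by (simp add: filter_empty_conv)
  have n1: "(w,1) \<in> cnbh ?W ?F (x,1)" "(w,1) \<in> cnbh ?W ?F (x,2)"
    using blow_nb[OF x12(1) w1] blow_nb[OF x12(2) w1] w(1) by auto
  have IH: "double_nbh_seq ?W ?F (dbl xs)" using snoc.hyps lx(1) by blast
  have nin: "(x,1) \<notin> set (dbl xs)" "(x,2) \<notin> set (dbl xs)" using lx(2) by (auto simp: set_dbl)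
  have e1: "\<exists>u \<in> cnbh ?W ?F (x,1). length (filter (\<lambda>y. u \<in> cnbh ?W ?F y) (dbl xs)) \<le> 1"
    using n1(1) c0 by (intro bexI[of _ "(w,1)"]) auto
  have e2: "\<exists>u \<in> cnbh ?W ?F (x,2). length (filter (\<lambda>y. u \<in> cnbh ?W ?F y) (dbl xs @ [(x,1)])) \<le> 1"
    using n1 c0 by (intro bexI[of _ "(w,1)"]) auto
  have s1: "double_nbh_seq ?W ?F (dbl xs @ [(x,1)])"
    using dn_snoc[of ?W ?F "dbl xs" "(x,1)"] IH nin x12 e1 by blast
  have "double_nbh_seq ?W ?F ((dbl xs @ [(x,1)]) @ [(x,2)])"
  proof -
    have "(x,2) \<notin> set (dbl xs @ [(x,1)])" using nin by simp
    then show ?thesis using dn_snoc[of ?W ?F "dbl xs @ [(x,1)]" "(x,2)"] s1 x12 e2 by blast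
  qed
  then show ?case by (simp add: dbl_snoc)
qed

lemma dir1b:
  assumes G: "simple_graph V E" and f: "\<forall>v\<in>V. f v \<ge> 1" and D: "dominating_seq V E s"
  shows "double_dominating_seq (blowup_V V f) (blowup_E V E f) (dbl s)"
  unfolding double_dominating_seq_def
proof
  show "double_nbh_seq (blowup_V V f) (blowup_E V E f) (dbl s)"
    using dir1[OF G f] D by (simp add: dominating_seq_def)
  show "\<forall>w\<in>blowup_V V f. 2 \<le> card (cnbh (blowup_V V f) (blowup_E V E f) w \<inter> set (dbl s))"
  proof
    fix w assume wW: "w \<in> blowup_V V f"
    then have wV: "fst w \<in> V" by (auto simp: blowup_V_def)
    obtain v where v: "v \<in> set s" "fst w \<in> cnbh V E v" using D wV by (auto simp: dominating_seq_def)
    have vV: "v \<in> V" using v(1) D by (auto simp: dominating_seq_def legal_seq_def)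
    have v12: "(v,1) \<in> blowup_V V f" "(v,2) \<in> blowup_V V f" using vV f by (auto simp: blowup_V_def)
    have "v \<in> cnbh V E (fst w)" using cnbh_sym[OF G wV vV] v(2) by simp
    then have "{(v,1),(v,2)} \<subseteq> cnbh (blowup_V V f) (blowup_E V E f) w \<inter> set (dbl s)"
      using blow_nb[OF wW v12(1)] blow_nb[OF wW v12(2)] v(1) by (auto simp: set_dbl)
    moreover have "finite (cnbh (blowup_V V f) (blowup_E V E f) w \<inter> set (dbl s))" by simp
    ultimately have "card {(v,1::nat),(v,2)} \<le> card (cnbh (blowup_V V f) (blowup_E V E f) w \<inter> set (dbl s))"
      by (rule card_mono[rotated])
    then show "2 \<le> card (cnbh (blowup_V V f) (blowup_E V E f) w \<inter> set (dbl s))" by simp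
  qed
qed

lemma extend:
  assumes G: "simple_graph V E" and L: "legal_seq V E s"
  shows "\<exists>s'. dominating_seq V E s' \<and> length s \<le> length s'"
  using L
proof (induct "card V - length s" arbitrary: s rule: less_induct)
  case less
  show ?case
  proof (cases "dominating_seq V E s")
    case True then show ?thesis by blast
  next
    case False
    then obtain w where w: "w \<in> V" "\<forall>v\<in>set s. w \<notin> cnbh V E v"
      using less.prems by (auto simp: dominating_seq_def)
    have ws: "w \<notin> set s" using w(2) cnbh_self by metis
    have L2: "legal_seq V E (s @ [w])"
    proof -
      have "w \<in> cnbh V E w - \<Union>(cnbh V E ` set s)" using w cnbh_self[of w V E] by auto
      then have "cnbh V E w - \<Union>(cnbh V E ` set s) \<noteq> {}" by blast
      then show ?thesis using legal_snoc[of V E s w] less.prems ws w(1) by simp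
    qed
    have fin: "finite V" using G by (simp add: simple_graph_def)
    have sV: "set s \<subseteq> V" "distinct s" using less.prems by (auto simp: legal_seq_def)
    have "set s \<subset> V" using sV w ws by blast
    then have "card (set s) < card V" using fin by (simp add: psubset_card_mono)
    then have "length s < card V" using distinct_card[OF sV(2)] by simp
    then have "card V - length (s @ [w]) < card V - length s" by simp
    from less.hyps[OF this L2] show ?thesis by force
  qed
qed

lemma forest_color:
  assumes "\<forall>i j. R i j \<longrightarrow> j < i" "\<forall>i j k. R i j \<and> R i k \<longrightarrow> j = k"
  shows "\<exists>c::nat\<Rightarrow>bool. \<forall>i j. i < m \<longrightarrow> R i j \<longrightarrow> c i \<noteq> c j"
proof (induct m)
  case 0 then show ?case by simp
next
  case (Suc m)
  then obtain c :: "nat \<Rightarrow> bool" where c: "\<forall>i j. i < m \<longrightarrow> R i j \<longrightarrow> c i \<noteq> c j" by blast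
  define c' where "c' = c(m := \<not> c (SOME j. R m j))"
  have "\<forall>i j. i < Suc m \<longrightarrow> R i j \<longrightarrow> c' i \<noteq> c' j"
  proof (intro allI impI)
    fix i j assume i: "i < Suc m" "R i j"
    then have ji: "j < i" using assms(1) by blast
    show "c' i \<noteq> c' j"
    proof (cases "i = m")
      case True
      then have "(SOME j. R m j) = j" using i(2) assms(2) by (metis someI)
      then show ?thesis using True ji by (simp add: c'_def)
    next
      case False
      then show ?thesis using c i ji by (simp add: c'_def)
    qed
  qed
  then show ?case by blast
qed

lemma half:
  assumes "\<forall>i j. R i j \<longrightarrow> j < i" "\<forall>i j k. R i j \<and> R i k \<longrightarrow> j = k"
  shows "\<exists>I. I \<subseteq> {..<m} \<and> m \<le> 2 * card I \<and> (\<forall>i\<in>I. \<forall>j\<in>I. \<not> R i j)"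
proof -
  obtain c :: "nat \<Rightarrow> bool" where c: "\<forall>i j. i < m \<longrightarrow> R i j \<longrightarrow> c i \<noteq> c j"
    using forest_color[OF assms] by blast
  let ?A = "{i. i < m \<and> c i}" and ?B = "{i. i < m \<and> \<not> c i}"
  have "?A \<union> ?B = {..<m}" by auto
  moreover have "card (?A \<union> ?B) = card ?A + card ?B" by (rule card_Un_disjoint) auto
  ultimately have m: "card ?A + card ?B = m" by simp
  have iA: "\<forall>i\<in>?A. \<forall>j\<in>?A. \<not> R i j" using c by auto
  have iB: "\<forall>i\<in>?B. \<forall>j\<in>?B. \<not> R i j" using c by auto
  show ?thesis
  proof (cases "card ?B \<le> card ?A")
    case True then show ?thesis using m iA by (intro exI[of _ ?A]) auto
  next
    case False then show ?thesis using m iB by (intro exI[of _ ?B]) auto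
  qed
qed


lemma dir2:
  assumes G: "simple_graph V E" and D: "double_nbh_seq (blowup_V V f) (blowup_E V E f) t"
  shows "\<exists>s. legal_seq V E s \<and> length t \<le> 2 * length s"
proof -
  let ?W = "blowup_V V f" and ?F = "blowup_E V E f"
  let ?N = "cnbh ?W ?F"
  define m where "m = length t"
  have "\<forall>i. \<exists>x. i < m \<longrightarrow> x \<in> ?N (t!i) \<and> card {j. j < i \<and> x \<in> ?N (t!j)} \<le> 1"
    using D unfolding double_nbh_seq_def m_def by metis
  from choice[OF this] obtain u where u: "\<And>i. i < m \<Longrightarrow> u i \<in> ?N (t!i) \<and> card {j. j < i \<and> u i \<in> ?N (t!j)} \<le> 1"
    by blast
  define R where "R i j \<longleftrightarrow> i < m \<and> j < i \<and> u i \<in> ?N (t!j)" for i j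
  have R1: "\<forall>i j. R i j \<longrightarrow> j < i" by (simp add: R_def)
  have R2: "\<forall>i j k. R i j \<and> R i k \<longrightarrow> j = k"
  proof (intro allI impI)
    fix i j k assume a: "R i j \<and> R i k"
    show "j = k"
    proof (rule ccontr)
      assume ne: "j \<noteq> k"
      let ?S = "{j. j < i \<and> u i \<in> ?N (t!j)}"
      have "{j,k} \<subseteq> ?S" using a by (auto simp: R_def)
      moreover have "finite ?S" by (rule finite_subset[of _ "{..<i}"]) auto
      ultimately have "card {j,k} \<le> card ?S" by (rule card_mono[rotated])
      moreover have "card ?S \<le> 1" using u a by (auto simp: R_def)
      ultimately show False using ne by simp
    qed
  qed
  obtain I where I: "I \<subseteq> {..<m}" "m \<le> 2 * card I" "\<forall>i\<in>I. \<forall>j\<in>I. \<not> R i j"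
    using half[OF R1 R2] by blast
  have fI: "finite I" using I(1) finite_subset by blast
  define ixs where "ixs = sorted_list_of_set I"
  have ixs: "set ixs = I" "distinct ixs" "length ixs = card I" "sorted_wrt (<) ixs"
    using fI by (auto simp: ixs_def)
  define s where "s = map (\<lambda>i. fst (t!i)) ixs"
  have lt: "\<And>a b. a < b \<Longrightarrow> b < length ixs \<Longrightarrow> ixs!a < ixs!b"
    using ixs(4) by (simp add: sorted_wrt_nth_less)
  have inI: "\<And>a. a < length ixs \<Longrightarrow> ixs!a \<in> I" using ixs(1) nth_mem by blast
  have inm: "\<And>a. a < length ixs \<Longrightarrow> ixs!a < m" using inI I(1) by blast
  have tW: "\<And>i. i < m \<Longrightarrow> t!i \<in> ?W" using D by (auto simp: double_nbh_seq_def m_def)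
  have uW: "\<And>i. i < m \<Longrightarrow> u i \<in> ?W" using u tW blow_sub by blast
  have sb: "\<And>b. b < length ixs \<Longrightarrow> s!b = fst (t!(ixs!b))" by (simp add: s_def)
  have K1: "\<And>b. b < length ixs \<Longrightarrow> fst (u (ixs!b)) \<in> cnbh V E (s!b)"
  proof -
    fix b assume b: "b < length ixs"
    have "u (ixs!b) \<in> ?N (t!(ixs!b))" using u inm[OF b] by blast
    then show "fst (u (ixs!b)) \<in> cnbh V E (s!b)"
      using blow_nb[OF tW[OF inm[OF b]] uW[OF inm[OF b]]] sb[OF b] by simp
  qed
  have K2: "\<And>a b. a < b \<Longrightarrow> b < length ixs \<Longrightarrow> fst (u (ixs!b)) \<notin> cnbh V E (s!a)"
  proof -
    fix a b assume ab: "a < b" "b < length ixs"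
    have a: "a < length ixs" using ab by simp
    have "\<not> R (ixs!b) (ixs!a)" using I(3) inI[OF a] inI[OF ab(2)] by blast
    then have "u (ixs!b) \<notin> ?N (t!(ixs!a))" using inm[OF ab(2)] lt[OF ab] by (simp add: R_def)
    then show "fst (u (ixs!b)) \<notin> cnbh V E (s!a)"
      using blow_nb[OF tW[OF inm[OF a]] uW[OF inm[OF ab(2)]]] sb[OF a] by simp
  qed
  have ls: "length s = length ixs" by (simp add: s_def)
  have dist: "distinct s"
    unfolding distinct_conv_nth ls
  proof (intro allI impI)
    fix a b assume ab: "a < length ixs" "b < length ixs" "a \<noteq> b"
    show "s!a \<noteq> s!b"
    proof (cases "a < b")
      case True then show ?thesis using K1[OF ab(2)] K2[OF True ab(2)] by metis
    next
      case False then have "b < a" using ab(3) by simp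
      then show ?thesis using K1[OF ab(1)] K2[OF \<open>b < a\<close> ab(1)] by metis
    qed
  qed
  have sV: "set s \<subseteq> V"
  proof
    fix x assume "x \<in> set s"
    then obtain a where a: "a < length ixs" "x = s!a" by (metis in_set_conv_nth ls)
    then show "x \<in> V" using tW[OF inm[OF a(1)]] sb[OF a(1)] by (auto simp: blowup_V_def)
  qed
  have "legal_seq V E s"
    unfolding legal_seq_def
  proof (intro conjI dist sV allI impI)
    fix b assume b: "b < length s" "1 \<le> b"
    have "fst (u (ixs!b)) \<in> cnbh V E (s ! b) - (\<Union>j<b. cnbh V E (s ! j))"
      using K1[of b] K2[of _ b] b ls by auto
    then show "cnbh V E (s ! b) - (\<Union>j<b. cnbh V E (s ! j)) \<noteq> {}" by blast
  qed
  moreover have "length t \<le> 2 * length s" using I(2) ls ixs(3) m_def by simp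
  ultimately show ?thesis by blast
qed

lemma fin_dist: "finite A \<Longrightarrow> finite {s. distinct s \<and> set s \<subseteq> A \<and> P s}"
  by (rule finite_subset[OF _ finite_subset_distinct[of A]]) auto

theorem proposition6:
  fixes V :: "'a set" and E :: "'a \<Rightarrow> 'a \<Rightarrow> bool" and f :: "'a \<Rightarrow> nat"
  assumes "simple_graph V E" and "V \<noteq> {}" and "\<forall>v \<in> V. f v \<ge> 1"
  shows "2 * gamma_gr V E = gamma_gr2 (blowup_V V f) (blowup_E V E f)"
proof -
  let ?W = "blowup_V V f" and ?F = "blowup_E V E f"
  let ?L1 = "length ` {s. dominating_seq V E s}"
  let ?L2 = "length ` {s. double_dominating_seq ?W ?F s}"
  have fV: "finite V" using assms(1) by (simp add: simple_graph_def)
  have fW: "finite ?W"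
  proof -
    have "?W \<subseteq> V \<times> {..Max (f ` V) + 1}"
      using fV by (auto simp: blowup_V_def intro: Max_ge order.trans)
    then show ?thesis using fV finite_subset by blast
  qed
  have f1: "finite ?L1"
    using fin_dist[OF fV, of "dominating_seq V E"]
    by (intro finite_imageI, rule finite_subset[rotated]) (auto simp: dominating_seq_def legal_seq_def)
  have f2: "finite ?L2"
    using fin_dist[OF fW, of "double_dominating_seq ?W ?F"]
    by (intro finite_imageI, rule finite_subset[rotated]) (auto simp: double_dominating_seq_def double_nbh_seq_def)
  have "legal_seq V E []" by (simp add: legal_seq_def)
  then obtain s0 where s0: "dominating_seq V E s0" using extend[OF assms(1)] by blast
  have ne1: "?L1 \<noteq> {}" using s0 by blast
  have ne2: "?L2 \<noteq> {}" using dir1b[OF assms(1) assms(3) s0] by blast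
  obtain s1 where s1: "dominating_seq V E s1" "length s1 = Max ?L1"
    using Max_in[OF f1 ne1] by auto
  obtain t1 where t1: "double_dominating_seq ?W ?F t1" "length t1 = Max ?L2"
    using Max_in[OF f2 ne2] by auto
  have "length (dbl s1) \<in> ?L2" using dir1b[OF assms(1) assms(3) s1(1)] by blast
  then have A: "2 * Max ?L1 \<le> Max ?L2" using Max_ge[OF f2] s1(2) len_dbl by metis
  obtain s2 where s2: "legal_seq V E s2" "length t1 \<le> 2 * length s2"
  proof -
    have "double_nbh_seq ?W ?F t1" using t1(1) by (simp add: double_dominating_seq_def)
    from dir2[OF assms(1) this] show ?thesis using that by blast
  qed
  obtain s3 where s3: "dominating_seq V E s3" "length s2 \<le> length s3"
    using extend[OF assms(1) s2(1)] by blast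
  have "length s3 \<le> Max ?L1" using Max_ge[OF f1] s3(1) by blast
  then have B: "Max ?L2 \<le> 2 * Max ?L1" using t1(2) s2(2) s3(2) by linarith
  show ?thesis unfolding gamma_gr_def gamma_gr2_def using A B by linarith
qed

end
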